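(* Let $k,\lambda,j$ be integers with $k>\lambda>j>1$. If an infinite word avoids $(k,\lambda)$-anti-powers (i.e. has no factor that is a $(k,\lambda)$-anti-power), then it avoids $(k-j,\lambda-j)$-anti-powers.
   Context: A factor is a contiguous subword. A $(k,\lambda)$-anti-power is a word $w=w_1\cdots w_k$ with $|w_1|=\cdots=|w_k|$ (nonempty blocks) such that $|\{i: w_i=w_j\}|\le\lambda$ for each $j\in\{1,\dots,k\}$. *)

theory Defs
  imports Main
begin

definition block :: "'a list \<Rightarrow> nat \<Rightarrow> nat \<Rightarrow> 'a list" where
  "block u m b = take m (drop (b * m) u)"

definition anti_power :: "nat \<Rightarrow> nat \<Rightarrow> 'a list \<Rightarrow> bool" where
  "anti_power k lam u \<longleftrightarrow>
     (\<exists>m>0. length u = k * m \<and>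
        (\<forall>j<k. card {i. i < k \<and> block u m i = block u m j} \<le> lam))"

definition factor :: "(nat \<Rightarrow> 'a) \<Rightarrow> nat \<Rightarrow> nat \<Rightarrow> 'a list" where
  "factor x i n = map x [i..<i+n]"

definition avoids_anti_powers :: "nat \<Rightarrow> nat \<Rightarrow> (nat \<Rightarrow> 'a) \<Rightarrow> bool" where
  "avoids_anti_powers k lam x \<longleftrightarrow> (\<forall>i n. \<not> anti_power k lam (factor x i n))"

end

theory Submission
  imports Defs
begin

lemma block_factor:
  assumes "b < K"
  shows "block (factor x i (K*m)) m b = factor x (i+b*m) m"
proof -
  have "b*m + m \<le> K*m" using assms
    by (metis add.commute mult_Suc mult_le_mono1 Suc_leI)
  then show ?thesis unfolding block_def factor_def
    by (simp add: drop_map take_map add.assoc)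
qed

theorem lemma4p1:
  fixes k lam j :: nat and x :: "nat \<Rightarrow> 'a"
  assumes "k > lam" and "lam > j" and "j > 1"
    and "avoids_anti_powers k lam x"
  shows "avoids_anti_powers (k - j) (lam - j) x"
  unfolding avoids_anti_powers_def
proof (intro allI notI)
  fix i n
  assume "anti_power (k - j) (lam - j) (factor x i n)"
  then obtain m where m: "m > 0" and len: "length (factor x i n) = (k-j)*m"
    and cnt: "\<forall>t<k-j. card {s. s < k-j \<and> block (factor x i n) m s = block (factor x i n) m t} \<le> lam - j"
    unfolding anti_power_def by blast
  have n: "n = (k-j)*m" using len unfolding factor_def by simp
  define F where "F s = factor x (i+s*m) m" for s
  have cnt2: "card {s. s < k-j \<and> F s = F t} \<le> lam - j" if "t < k-j" for t
  proof -
    have "{s. s < k-j \<and> block (factor x i n) m s = block (factor x i n) m t}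
        = {s. s < k-j \<and> F s = F t}"
      using that by (auto simp: n block_factor F_def)
    then show ?thesis using cnt that by metis
  qed
  have "anti_power k lam (factor x i (k*m))"
    unfolding anti_power_def
  proof (intro exI[of _ m] conjI allI impI)
    show "m > 0" by fact
    show "length (factor x i (k*m)) = k*m" by (simp add: factor_def)
    fix t assume t: "t < k"
    have eq: "{s. s < k \<and> block (factor x i (k*m)) m s = block (factor x i (k*m)) m t}
        = {s. s < k \<and> F s = F t}"
      using t by (auto simp: block_factor F_def)
    have sub: "{s. s < k \<and> F s = F t} \<subseteq> {s. s < k-j \<and> F s = F t} \<union> {k-j..<k}"
      by auto
    have A: "card {s. s < k-j \<and> F s = F t} \<le> lam - j"
    proof (cases "\<exists>a. a < k-j \<and> F a = F t")
      case True
      then obtain a where a: "a < k-j" "F a = F t" by blast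
      have "{s. s < k-j \<and> F s = F t} = {s. s < k-j \<and> F s = F a}" using a by auto
      then show ?thesis using cnt2[OF a(1)] by simp
    next
      case False
      then have "{s. s < k-j \<and> F s = F t} = {}" by blast
      then show ?thesis by (metis card.empty zero_le)
    qed
    have "card {s. s < k \<and> F s = F t} \<le> card ({s. s < k-j \<and> F s = F t} \<union> {k-j..<k})"
      by (rule card_mono[OF _ sub]) auto
    also have "\<dots> \<le> card {s. s < k-j \<and> F s = F t} + card {k-j..<k}"
      by (rule card_Un_le)
    also have "\<dots> \<le> lam - j + j" using A assms by simp
    also have "\<dots> = lam" using assms by simp
    finally show "card {s. s < k \<and> block (factor x i (k*m)) m s = block (factor x i (k*m)) m t} \<le> lam"
      using eq by simp
  qed
  then show False using assms(4) unfolding avoids_anti_powers_def by blast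
qed

end
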